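(* Let $n\geq 8$, let $\mathfrak{X}=\{A_0,A_1,A_2\}$ be a non-symmetric class $2$ association scheme of order $n-1$, and let $B_1$ be the $(2n-1)\times(2n-1)$ matrix defined from $A_1$ as in the context, so that $\{I_{2n-1},B_1,B_1^T\}$ is a non-symmetric class $2$ association scheme. For $i\in\{1,\dots,2n-1\}$ let $N(i)=\{j : (B_1)_{ij}=1\}$, and for $1\le i<j<k\le 2n-1$ let $\nu(i,j,k)=|N(i)\cap N(j)\cap N(k)|$. Then $\nu(i,j,k)\leq (n-2)/2$ for all $1\le i<j<k\le 2n-1$, with equality if and only if $(i,j,k)=(a,n,n+a)$ for some $1\leq a\leq n-1$.
   Context: An association scheme of order $N$ is a set $\{A_0,\dots,A_d\}$ of $N\times N$ $0/1$-matrices such that $A_0=I_N$, $\sum_i A_i=J_N$ (all-ones matrix), each $A_i^T$ is in the set, and each product $A_iA_j$ is a linear combination of the $A_k$. It is non-symmetric of class $2$ if $d=2$ and $A_1^T=A_2\neq A_1$. (For such a scheme of order $n-1$ one has $n\equiv 0 \pmod 4$.) Definition of $B_1$ (indices $1\le i,j\le n-1$): $(B_1)_{i,j}=(A_1)_{ij}$, $(B_1)_{i,n}=0$, $(B_1)_{i,n+j}=(A_0+A_1)_{ij}$; $(B_1)_{n,j}=1$, $(B_1)_{n,n}=0$, $(B_1)_{n,n+j}=0$; $(B_1)_{n+i,j}=(A_1)_{ij}$, $(B_1)_{n+i,n}=1$, $(B_1)_{n+i,n+j}=(A_2)_{ij}$. In block form, $B_1=\begin{bmatrix} A_1 & \mathbf{0}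 & A_0+A_1\\ \mathbf{1}^T & 0 & \mathbf{0}^T\\ A_1 & \mathbf{1} & A_2\end{bmatrix}$ with blocks indexed by $\{1,\dots,n-1\},\{n\},\{n+1,\dots,2n-1\}$. *)

theory Defs
  imports Complex_Main
begin

text \<open>Square matrices of order N are represented as functions nat => nat => real,
  where only the entries with indices in {1..N} are meaningful.\<close>

type_synonym mat = "nat \<Rightarrow> nat \<Rightarrow> real"

definition mat_mult :: "nat \<Rightarrow> mat \<Rightarrow> mat \<Rightarrow> mat" where
  "mat_mult N X Y = (\<lambda>i j. \<Sum>k=1..N. X i k * Y k j)"

text \<open>An association scheme of order N and class d, given by the family A 0, ..., A d
  (a set of d+1 matrices, hence pairwise distinct on the index set).\<close>

definition assoc_scheme :: "nat \<Rightarrow> nat \<Rightarrow> (nat \<Rightarrow> mat) \<Rightarrow> bool" where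
  "assoc_scheme N d A \<longleftrightarrow>
     (\<forall>i\<le>d. \<forall>x\<in>{1..N}. \<forall>y\<in>{1..N}. A i x y = 0 \<or> A i x y = 1) \<and>
     (\<forall>i\<le>d. \<forall>j\<le>d. i \<noteq> j \<longrightarrow> (\<exists>x\<in>{1..N}. \<exists>y\<in>{1..N}. A i x y \<noteq> A j x y)) \<and>
     (\<forall>x\<in>{1..N}. \<forall>y\<in>{1..N}. A 0 x y = (if x = y then 1 else 0)) \<and>
     (\<forall>x\<in>{1..N}. \<forall>y\<in>{1..N}. (\<Sum>i\<le>d. A i x y) = 1) \<and>
     (\<forall>i\<le>d. \<exists>j\<le>d. \<forall>x\<in>{1..N}. \<forall>y\<in>{1..N}. A j x y = A i y x) \<and>
     (\<forall>i\<le>d. \<forall>j\<le>d. \<exists>c :: nat \<Rightarrow> real. \<forall>x\<in>{1..N}. \<forall>y\<in>{1..N}.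
         mat_mult N (A i) (A j) x y = (\<Sum>k\<le>d. c k * A k x y))"

definition nonsym_class2_scheme :: "nat \<Rightarrow> (nat \<Rightarrow> mat) \<Rightarrow> bool" where
  "nonsym_class2_scheme N A \<longleftrightarrow>
     assoc_scheme N 2 A \<and>
     (\<forall>x\<in>{1..N}. \<forall>y\<in>{1..N}. A 2 x y = A 1 y x) \<and>
     (\<exists>x\<in>{1..N}. \<exists>y\<in>{1..N}. A 2 x y \<noteq> A 1 x y)"

definition B1 :: "nat \<Rightarrow> (nat \<Rightarrow> mat) \<Rightarrow> mat" where
  "B1 n A = (\<lambda>r s.
     if r \<le> n - 1 then
       (if s \<le> n - 1 then A 1 r s else if s = n then 0 else A 0 r (s - n) + A 1 r (s - n))
     else if r = n then
       (if s \<le> n - 1 then 1 else 0)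
     else
       (if s \<le> n - 1 then A 1 (r - n) s else if s = n then 1 else A 2 (r - n) (s - n)))"

definition nbhd :: "nat \<Rightarrow> (nat \<Rightarrow> mat) \<Rightarrow> nat \<Rightarrow> nat set" where
  "nbhd n A i = {j \<in> {1..2*n-1}. B1 n A i j = 1}"

definition nu :: "nat \<Rightarrow> (nat \<Rightarrow> mat) \<Rightarrow> nat \<Rightarrow> nat \<Rightarrow> nat \<Rightarrow> nat" where
  "nu n A i j k = card (nbhd n A i \<inter> nbhd n A j \<inter> nbhd n A k)"

end

theory Submission
  imports Defs
begin


locale dr =
  fixes m t :: nat and Out In :: "nat \<Rightarrow> nat set"
  assumes OV: "Out x \<subseteq> {1..m}" and IV: "In x \<subseteq> {1..m}"
    and Oirr: "x \<in> {1..m} \<Longrightarrow> x \<notin> Out x" and Iirr: "x \<in> {1..m} \<Longrightarrow> x \<notin> In x"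
    and OI: "x \<in> {1..m} \<Longrightarrow> y \<in> {1..m} \<Longrightarrow> y \<in> Out x \<longleftrightarrow> x \<in> In y"
    and tot: "x \<in> {1..m} \<Longrightarrow> y \<in> {1..m} \<Longrightarrow> x \<noteq> y \<Longrightarrow> y \<in> Out x \<or> y \<in> In x"
    and disj: "x \<in> {1..m} \<Longrightarrow> y \<in> Out x \<Longrightarrow> y \<notin> In x"
    and cardO: "x \<in> {1..m} \<Longrightarrow> card (Out x) = 2*t+1"
    and cardI: "x \<in> {1..m} \<Longrightarrow> card (In x) = 2*t+1"
    and cOO: "x \<in> {1..m} \<Longrightarrow> y \<in> {1..m} \<Longrightarrow> x \<noteq> y \<Longrightarrow> card (Out x \<inter> Out y) = t"
    and cII: "x \<in> {1..m} \<Longrightarrow> y \<in> {1..m} \<Longrightarrow> x \<noteq> y \<Longrightarrow> card (In x \<inter> In y) = t"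
    and t1: "t \<ge> 1"
begin

lemma finO[simp]: "finite (Out x)" using OV finite_subset by blast
lemma finI[simp]: "finite (In x)" using IV finite_subset by blast

lemma c3le: "a \<in> {1..m} \<Longrightarrow> b \<in> {1..m} \<Longrightarrow> a \<noteq> b \<Longrightarrow> card (Out a \<inter> Out b \<inter> X) \<le> t"
proof -
  assume "a \<in> {1..m}" "b \<in> {1..m}" "a \<noteq> b"
  hence "card (Out a \<inter> Out b) = t" by (rule cOO)
  moreover have "card (Out a \<inter> Out b \<inter> X) \<le> card (Out a \<inter> Out b)" by (rule card_mono) auto
  ultimately show ?thesis by simp
qed
lemma c3leI: "a \<in> {1..m} \<Longrightarrow> b \<in> {1..m} \<Longrightarrow> a \<noteq> b \<Longrightarrow> card (In a \<inter> In b \<inter> X) \<le> t"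
proof -
  assume "a \<in> {1..m}" "b \<in> {1..m}" "a \<noteq> b"
  hence "card (In a \<inter> In b) = t" by (rule cII)
  moreover have "card (In a \<inter> In b \<inter> X) \<le> card (In a \<inter> In b)" by (rule card_mono) auto
  ultimately show ?thesis by simp
qed

lemma C1_sink:
  assumes V: "a \<in> {1..m}" "b \<in> {1..m}" "c \<in> {1..m}" and d: "a \<noteq> b" "a \<noteq> c" "b \<noteq> c"
    and s: "a \<in> Out b" "a \<in> Out c"
  shows "card (Out a \<inter> Out b \<inter> Out c) + card (insert a (Out a) \<inter> insert b (Out b) \<inter> insert c (Out c)) < 2*t+1"
proof -
  have "b \<notin> Out a" using s OI V disj by blast
  have "c \<notin> Out a" using s OI V disj by blast
  have sub: "insert a (Out a) \<inter> insert b (Out b) \<inter> insert c (Out c) \<subseteq> insert a (Out a \<inter> Out b \<inter> Out c)"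
    using \<open>b \<notin> Out a\<close> \<open>c \<notin> Out a\<close> d by blast
  have c1: "card (insert a (Out a) \<inter> insert b (Out b) \<inter> insert c (Out c)) \<le> card (Out a \<inter> Out b \<inter> Out c) + 1"
    using card_mono[OF _ sub] card_insert_le_m1
    by (metis Suc_eq_plus1 card_insert_if finO finite_Int finite_insert le_SucI)
  have "Out a \<inter> Out b \<inter> Out c \<subseteq> (Out b \<inter> Out c) - {a}" using Oirr V by blast
  hence "card (Out a \<inter> Out b \<inter> Out c) \<le> card (Out b \<inter> Out c) - 1"
    using s by (metis IntI card_Diff_singleton card_mono finO finite_Diff finite_Int)
  with cOO[OF V(2,3) d(3)] t1 c1 show ?thesis by linarith
qed

lemma C1:
  assumes V: "a \<in> {1..m}" "b \<in> {1..m}" "c \<in> {1..m}" and d: "a \<noteq> b" "a \<noteq> c" "b \<noteq> c"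
  shows "card (Out a \<inter> Out b \<inter> Out c) + card (insert a (Out a) \<inter> insert b (Out b) \<inter> insert c (Out c)) < 2*t+1"
proof -
  let ?Y = "insert a (Out a) \<inter> insert b (Out b) \<inter> insert c (Out c)"
  consider "a \<in> ?Y" | "b \<in> ?Y" | "c \<in> ?Y" | "?Y \<subseteq> Out a \<inter> Out b \<inter> Out c" by blast
  then show ?thesis
  proof cases
    case 1 then show ?thesis using C1_sink[OF V d] d by blast
  next
    case 2
    hence "b \<in> Out a" "b \<in> Out c" using d by auto
    from C1_sink[OF V(2,1,3) _ _ _ this] d show ?thesis
      by (simp add: Int_ac insert_commute)
  next
    case 3
    hence "c \<in> Out a" "c \<in> Out b" using d by auto
    from C1_sink[OF V(3,1,2) _ _ _ this] d show ?thesis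
      by (simp add: Int_ac insert_commute)
  next
    case 4
    hence "card ?Y \<le> card (Out a \<inter> Out b \<inter> Out c)" by (intro card_mono) auto
    with c3le[OF V(1,2) d(1), of "Out c"] show ?thesis by linarith
  qed
qed

lemma C3_dir:
  assumes V: "a \<in> {1..m}" "b \<in> {1..m}" "c \<in> {1..m}" and d: "a \<noteq> b" and s: "b \<in> Out a"
  shows "card (Out a \<inter> Out b \<inter> Out c) + card (insert a (Out a) \<inter> insert b (Out b) \<inter> In c) < 2*t+1"
proof -
  have "a \<notin> Out b" using s OI V disj by blast
  have sub: "insert a (Out a) \<inter> insert b (Out b) \<inter> In c \<subseteq> insert b (Out a \<inter> Out b \<inter> In c)"
    using \<open>a \<notin> Out b\<close> d by blast
  have c1: "card (insert a (Out a) \<inter> insert b (Out b) \<inter> In c) \<le> card (Out a \<inter> Out b \<inter> In c) + 1"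
    using card_mono[OF _ sub]
    by (metis Suc_eq_plus1 card_insert_if finO finite_Int finite_insert le_SucI)
  have le: "card (Out a \<inter> Out b \<inter> Out c) \<le> t" "card (Out a \<inter> Out b \<inter> In c) \<le> t"
    using c3le[OF V(1,2) d] by auto
  show ?thesis
  proof (cases "card (Out a \<inter> Out b \<inter> Out c) = t")
    case True
    have "Out a \<inter> Out b \<inter> Out c = Out a \<inter> Out b"
      using card_subset_eq[of "Out a \<inter> Out b" "Out a \<inter> Out b \<inter> Out c"] True cOO[OF V(1,2) d] by auto
    hence "Out a \<inter> Out b \<inter> In c = {}" using disj[OF V(3)] by blast
    with c1 True t1 show ?thesis by simp
  next
    case False
    with le c1 show ?thesis by linarith
  qed
qed

lemma C3:
  assumes V: "a \<in> {1..m}" "b \<in> {1..m}" "c \<in> {1..m}" and d: "a \<noteq> b"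
  shows "card (Out a \<inter> Out b \<inter> Out c) + card (insert a (Out a) \<inter> insert b (Out b) \<inter> In c) < 2*t+1"
proof (cases "b \<in> Out a")
  case True then show ?thesis using C3_dir[OF V d] by blast
next
  case False
  hence "a \<in> Out b" using tot V d OI by blast
  from C3_dir[OF V(2,1,3) _ this] d show ?thesis by (simp add: Int_ac)
qed

lemma C5:
  assumes V: "a \<in> {1..m}" "b \<in> {1..m}" "c \<in> {1..m}" and d: "b \<noteq> c"
  shows "card (Out a \<inter> Out b \<inter> Out c) + card (insert a (Out a) \<inter> In b \<inter> In c) < 2*t+1"
proof -
  have "card (Out a \<inter> Out b \<inter> Out c) \<le> t" using c3le[OF V(2,3) d, of "Out a"] by (simp add: Int_ac)
  moreover have "card (insert a (Out a) \<inter> In b \<inter> In c) \<le> t" using c3leI[OF V(2,3) d, of "insert a (Out a)"] by (simp add: Int_ac)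
  ultimately show ?thesis by linarith
qed

lemma C7:
  assumes V: "a \<in> {1..m}" "b \<in> {1..m}" "c \<in> {1..m}" and d: "a \<noteq> b" "a \<noteq> c" "b \<noteq> c"
  shows "card (Out a \<inter> Out b \<inter> Out c) + 1 + card (In a \<inter> In b \<inter> In c) < 2*t+1"
proof (rule ccontr)
  assume "\<not> ?thesis"
  moreover have "card (Out a \<inter> Out b \<inter> Out c) \<le> t" "card (In a \<inter> In b \<inter> In c) \<le> t"
    using c3le[OF V(1,2) d(1)] c3leI[OF V(1,2) d(1)] by auto
  ultimately have e: "card (Out a \<inter> Out b \<inter> Out c) = t" "card (In a \<inter> In b \<inter> In c) = t" by linarith+
  have S1: "Out a \<inter> Out b \<inter> Out c = Out a \<inter> Out b"
    using card_subset_eq[of "Out a \<inter> Out b" "Out a \<inter> Out b \<inter> Out c"] e cOO[OF V(1,2) d(1)] by auto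
  have S2: "In a \<inter> In b \<inter> In c = In a \<inter> In b"
    using card_subset_eq[of "In a \<inter> In b" "In a \<inter> In b \<inter> In c"] e cII[OF V(1,2) d(1)] by auto
  let ?S = "Out a \<inter> Out b"
  have Sac: "?S = Out a \<inter> Out c"
    using card_subset_eq[of "Out a \<inter> Out c" ?S] S1 cOO[OF V(1,3) d(2)] cOO[OF V(1,2) d(1)] by auto
  have Sbc: "?S = Out b \<inter> Out c"
    using card_subset_eq[of "Out b \<inter> Out c" ?S] S1 cOO[OF V(2,3) d(3)] cOO[OF V(1,2) d(1)] by auto
  have sub: "Out c - ?S \<subseteq> {a, b}"
  proof
    fix y assume y: "y \<in> Out c - ?S"
    have yV: "y \<in> {1..m}" using y OV by blast
    have "y \<noteq> c" using y Oirr V by blast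
    have na: "y \<notin> Out a" using y Sac by blast
    have nb: "y \<notin> Out b" using y Sbc by blast
    show "y \<in> {a, b}"
    proof (rule ccontr)
      assume "y \<notin> {a, b}"
      hence "y \<in> In a" "y \<in> In b" using tot[OF V(1) yV] tot[OF V(2) yV] na nb by auto
      hence "y \<in> In c" using S2 by blast
      thus False using disj[OF V(3)] y by blast
    qed
  qed
  have "card (Out c - ?S) = t + 1"
    using card_Diff_subset[of ?S "Out c"] S1 cardO[OF V(3)] cOO[OF V(1,2) d(1)] by auto
  hence "a \<in> Out c \<and> b \<in> Out c"
    using sub t1 card_mono[of "{b}" "Out c - ?S"] card_mono[of "{a}" "Out c - ?S"]
    by (metis (no_types, lifting) DiffD1 Diff_insert0 One_nat_def add_le_same_cancel1 card.empty
        card.insert finite.emptyI finite_insert insert_commute le_add2 not_one_le_zero subset_insert_iff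
        Suc_eq_plus1 add_diff_cancel_right' card_Diff_singleton_if card_insert_disjoint empty_iff insert_Diff_single
        not_less_eq_eq subset_singleton_iff)
  hence "c \<in> In a" "c \<in> In b" using OI V by blast+
  hence "c \<in> In c" using S2 by blast
  thus False using Iirr V by blast
qed

end


definition tour :: "nat \<Rightarrow> mat \<Rightarrow> bool" where
  "tour m T \<longleftrightarrow> (\<forall>x\<in>{1..m}. \<forall>y\<in>{1..m}. T x y = 0 \<or> T x y = 1) \<and> (\<forall>x\<in>{1..m}. T x x = 0) \<and>
     (\<forall>x\<in>{1..m}. \<forall>y\<in>{1..m}. x \<noteq> y \<longrightarrow> T x y + T y x = 1)"

definition closedT :: "nat \<Rightarrow> mat \<Rightarrow> bool" where
  "closedT m T \<longleftrightarrow> (\<exists>c0 c1 c2. \<forall>x\<in>{1..m}. \<forall>y\<in>{1..m}.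
      (\<Sum>z=1..m. T x z * T y z) = c0 * (if x = y then 1 else 0) + c1 * T x y + c2 * T y x)"

lemma sum01: "finite S \<Longrightarrow> \<forall>z\<in>S. f z = 0 \<or> f z = (1::real) \<Longrightarrow> sum f S = real (card {z\<in>S. f z = 1})"
proof -
  assume f: "finite S" and h: "\<forall>z\<in>S. f z = 0 \<or> f z = (1::real)"
  have "sum f S = (\<Sum>z\<in>S. if f z = 1 then 1 else 0)" using h by (intro sum.cong) auto
  also have "\<dots> = real (card (S \<inter> {z. f z = 1}))" using f by (simp add: sum.If_cases)
  also have "S \<inter> {z. f z = 1} = {z\<in>S. f z = 1}" by auto
  finally show ?thesis .
qed

lemma tour_tr: "tour m T \<Longrightarrow> tour m (\<lambda>x y. T y x)"
  unfolding tour_def by (auto simp: add.commute)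

lemma tour_sumO: assumes "tour m T" "x \<in> {1..m}" "y \<in> {1..m}"
  shows "(\<Sum>z=1..m. T x z * T y z) = real (card ({z\<in>{1..m}. T x z = 1} \<inter> {z\<in>{1..m}. T y z = 1}))"
proof -
  have d: "\<And>z. z \<in> {1..m} \<Longrightarrow> (T x z = 0 \<or> T x z = 1) \<and> (T y z = 0 \<or> T y z = 1)"
    using assms unfolding tour_def by auto
  have "\<forall>z\<in>{1..m}. T x z * T y z = 0 \<or> T x z * T y z = 1"
  proof
    fix z assume "z \<in> {1..m}"
    from d[OF this] show "T x z * T y z = 0 \<or> T x z * T y z = 1" by (elim conjE disjE) auto
  qed
  hence "(\<Sum>z=1..m. T x z * T y z) = real (card {z\<in>{1..m}. T x z * T y z = 1})"
    by (intro sum01) auto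
  moreover have "{z\<in>{1..m}. T x z * T y z = 1} = {z\<in>{1..m}. T x z = 1} \<inter> {z\<in>{1..m}. T y z = 1}"
  proof -
    have "\<And>z. z \<in> {1..m} \<Longrightarrow> (T x z * T y z = 1) = (T x z = 1 \<and> T y z = 1)"
    proof -
      fix z assume z: "z \<in> {1..m}"
      have "T x z = 0 \<or> T x z = 1" "T y z = 0 \<or> T y z = 1" using assms z unfolding tour_def by auto
      thus "(T x z * T y z = 1) = (T x z = 1 \<and> T y z = 1)" by auto
    qed
    thus ?thesis by auto
  qed
  ultimately show ?thesis by simp
qed

lemma tour_sum1: assumes "tour m T" "x \<in> {1..m}"
  shows "(\<Sum>z=1..m. T x z) = real (card {z\<in>{1..m}. T x z = 1})"
  using assms unfolding tour_def by (intro sum01) auto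

lemma deg: assumes t: "tour m T" and c: "closedT m T" and V: "x \<in> {1..m}" "y \<in> {1..m}"
  shows "card {z\<in>{1..m}. T x z = 1} = card {z\<in>{1..m}. T y z = 1}"
proof -
  obtain c0 c1 c2 where h: "\<forall>x\<in>{1..m}. \<forall>y\<in>{1..m}.
      (\<Sum>z=1..m. T x z * T y z) = c0 * (if x = y then 1 else 0) + c1 * T x y + c2 * T y x"
    using c unfolding closedT_def by blast
  have "\<And>x. x \<in> {1..m} \<Longrightarrow> real (card {z\<in>{1..m}. T x z = 1}) = c0"
  proof -
    fix x assume x: "x \<in> {1..m}"
    have "T x x = 0" using t x unfolding tour_def by auto
    have "(\<Sum>z=1..m. T x z * T x z) = c0 * (if x = x then 1 else 0) + c1 * T x x + c2 * T x x"
      using h x by blast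
    thus "real (card {z\<in>{1..m}. T x z = 1}) = c0" using \<open>T x x = 0\<close> tour_sumO[OF t x x] by simp
  qed
  from this[OF V(1)] this[OF V(2)] show ?thesis by linarith
qed

lemma part: assumes t: "tour m T" and x: "x \<in> {1..m}"
  shows "card {z\<in>{1..m}. T x z = 1} + card {z\<in>{1..m}. T z x = 1} = m - 1"
proof -
  have h: "\<And>z. z \<in> {1..m} \<Longrightarrow> (T x z = 1 \<or> T z x = 1) = (z \<noteq> x) \<and> \<not> (T x z = 1 \<and> T z x = 1)"
  proof -
    fix z assume z: "z \<in> {1..m}"
    show "(T x z = 1 \<or> T z x = 1) = (z \<noteq> x) \<and> \<not> (T x z = 1 \<and> T z x = 1)"
    proof (cases "z = x")
      case True thus ?thesis using t x unfolding tour_def by auto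
    next
      case False
      have "T x z = 0 \<or> T x z = 1" "T z x = 0 \<or> T z x = 1" "T x z + T z x = 1"
        using t x z False unfolding tour_def by auto
      thus ?thesis using False by auto
    qed
  qed
  have "{z\<in>{1..m}. T x z = 1} \<union> {z\<in>{1..m}. T z x = 1} = {1..m} - {x}"
    using h by blast
  moreover have "{z\<in>{1..m}. T x z = 1} \<inter> {z\<in>{1..m}. T z x = 1} = {}"
    using h by blast
  ultimately have "card {z\<in>{1..m}. T x z = 1} + card {z\<in>{1..m}. T z x = 1} = card ({1..m} - {x})"
    by (subst card_Un_disjoint[symmetric]) auto
  thus ?thesis using x by simp
qed

lemma degeq: assumes t: "tour m T" and c: "closedT m T" and c': "closedT m (\<lambda>x y. T y x)" and x: "x \<in> {1..m}"
  shows "card {z\<in>{1..m}. T x z = 1} = card {z\<in>{1..m}. T z x = 1}"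
proof -
  define d where "d = card {z\<in>{1..m}. T x z = 1}"
  define e where "e = card {z\<in>{1..m}. T z x = 1}"
  have D: "\<And>y. y \<in> {1..m} \<Longrightarrow> card {z\<in>{1..m}. T y z = 1} = d" unfolding d_def using deg[OF t c _ x] by blast
  have E: "\<And>y. y \<in> {1..m} \<Longrightarrow> card {z\<in>{1..m}. T z y = 1} = e" unfolding e_def
    using deg[OF tour_tr[OF t] c' _ x] by blast
  have "(\<Sum>y=1..m. \<Sum>z=1..m. T y z) = (\<Sum>y=1..m. real d)"
    using D tour_sum1[OF t] by (intro sum.cong) auto
  moreover have "(\<Sum>z=1..m. \<Sum>y=1..m. T y z) = (\<Sum>z=1..m. real e)"
    using E tour_sum1[OF tour_tr[OF t]] by (intro sum.cong) auto
  moreover have "(\<Sum>y=1..m. \<Sum>z=1..m. T y z) = (\<Sum>z=1..m. \<Sum>y=1..m. T y z)" by (rule sum.swap)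
  ultimately have "real m * d = real m * e" by simp
  moreover have "m > 0" using x by auto
  ultimately show ?thesis unfolding d_def e_def by simp
qed

lemma lam: assumes t: "tour m T" and c: "closedT m T"
  and D: "\<And>x. x \<in> {1..m} \<Longrightarrow> card {z\<in>{1..m}. T x z = 1} = k"
  and E: "\<And>x. x \<in> {1..m} \<Longrightarrow> card {z\<in>{1..m}. T z x = 1} = k"
  and m: "m \<ge> 2" and V: "x \<in> {1..m}" "y \<in> {1..m}" and xy: "x \<noteq> y"
  shows "2 * card ({z\<in>{1..m}. T x z = 1} \<inter> {z\<in>{1..m}. T y z = 1}) + 1 = k"
proof -
  obtain c0 c1 c2 where h: "\<forall>x\<in>{1..m}. \<forall>y\<in>{1..m}.
      (\<Sum>z=1..m. T x z * T y z) = c0 * (if x = y then 1 else 0) + c1 * T x y + c2 * T y x"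
    using c unfolding closedT_def by blast
  let ?C = "\<lambda>x y. real (card ({z\<in>{1..m}. T x z = 1} \<inter> {z\<in>{1..m}. T y z = 1}))"
  have Cxy: "\<And>x y. x \<in> {1..m} \<Longrightarrow> y \<in> {1..m} \<Longrightarrow> x \<noteq> y \<Longrightarrow> ?C x y = c1 * T x y + c2 * T y x"
  proof -
    fix x y assume a: "x \<in> {1..m}" "y \<in> {1..m}" "x \<noteq> y"
    have "(\<Sum>z=1..m. T x z * T y z) = c0 * (if x = y then 1 else 0) + c1 * T x y + c2 * T y x"
      using h a by blast
    thus "?C x y = c1 * T x y + c2 * T y x" using tour_sumO[OF t a(1,2)] a(3) by simp
  qed
  have "?C 1 2 = ?C 2 1" by (simp add: Int_commute)
  moreover have "1 \<in> {1..m}" "2 \<in> {1..m}" using m by auto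
  ultimately have "c1 * T 1 2 + c2 * T 2 1 = c1 * T 2 1 + c2 * T 1 2"
    using Cxy[of 1 2] Cxy[of 2 1] by simp
  moreover have "T 1 2 + T 2 1 = 1" "T 1 2 = 0 \<or> T 1 2 = 1"
    using t \<open>1 \<in> {1..m}\<close> \<open>2 \<in> {1..m}\<close> unfolding tour_def by auto
  ultimately have c12: "c1 = c2" by auto
  have Cc: "\<And>y. y \<in> {1..m} \<Longrightarrow> y \<noteq> x \<Longrightarrow> ?C x y = c1"
  proof -
    fix y assume "y \<in> {1..m}" "y \<noteq> x"
    moreover hence "T x y + T y x = 1" using t V unfolding tour_def by auto
    ultimately show "?C x y = c1" using Cxy[OF V(1), of y] c12 by (simp add: distrib_left[symmetric])
  qed
  have "(\<Sum>y\<in>{1..m}. ?C x y) = ?C x x + (\<Sum>y\<in>{1..m} - {x}. ?C x y)"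
    using V by (simp add: sum.remove)
  also have "\<dots> = real k + (\<Sum>y\<in>{1..m} - {x}. c1)" using D[OF V(1)] Cc by (intro arg_cong2[where f="(+)"] sum.cong) auto
  also have "\<dots> = real k + (real m - 1) * c1" using V by (simp add: of_nat_diff)
  finally have s1: "(\<Sum>y\<in>{1..m}. ?C x y) = real k + (real m - 1) * c1" .
  have "(\<Sum>y\<in>{1..m}. ?C x y) = (\<Sum>y=1..m. \<Sum>z=1..m. T x z * T y z)"
    using tour_sumO[OF t V(1)] by (intro sum.cong) auto
  also have "\<dots> = (\<Sum>z=1..m. \<Sum>y=1..m. T x z * T y z)" by (rule sum.swap)
  also have "\<dots> = (\<Sum>z=1..m. T x z * real k)"
  proof (intro sum.cong refl)
    fix z assume z: "z \<in> {1..m}"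
    have "(\<Sum>y=1..m. T y z) = real k" using tour_sum1[OF tour_tr[OF t] z] E[OF z] by simp
    thus "(\<Sum>y=1..m. T x z * T y z) = T x z * real k" by (simp add: sum_distrib_left[symmetric])
  qed
  also have "\<dots> = real k * real k"
    using tour_sum1[OF t V(1)] D[OF V(1)] by (simp add: sum_distrib_right[symmetric])
  finally have s2: "(\<Sum>y\<in>{1..m}. ?C x y) = real k * real k" .
  have mk: "m - 1 = k + k" using part[OF t V(1)] D E V by simp
  hence "real m - 1 = 2 * real k" using m by linarith
  with s1 s2 have "real k + 2 * real k * c1 = real k * real k" by simp
  hence "real k * (1 + 2 * c1) = real k * real k" by (simp add: algebra_simps)
  moreover have "k > 0" using mk m by linarith
  ultimately have "1 + 2 * c1 = real k" by simp
  thus ?thesis using Cc[OF V(2)] xy by linarith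
qed



lemma card_split:
  fixes n :: nat
  assumes S: "S \<subseteq> {1..2*n-1}" and n: "n \<ge> 1"
  shows "card S = card {y\<in>{1..n-1}. y \<in> S} + card {y\<in>{n}. y \<in> S} + card {b\<in>{1..n-1}. n + b \<in> S}"
proof -
  have eq: "S = ({y\<in>{1..n-1}. y \<in> S} \<union> {y\<in>{n}. y \<in> S}) \<union> (\<lambda>b. n + b) ` {b\<in>{1..n-1}. n + b \<in> S}"
  proof (rule set_eqI, rule iffI)
    fix x assume x: "x \<in> S"
    hence x1: "1 \<le> x" "x \<le> 2*n-1" using S by auto
    show "x \<in> ({y\<in>{1..n-1}. y \<in> S} \<union> {y\<in>{n}. y \<in> S}) \<union> (\<lambda>b. n + b) ` {b\<in>{1..n-1}. n + b \<in> S}"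
    proof (cases "x \<le> n - 1")
      case True thus ?thesis using x x1 by auto
    next
      case False
      show ?thesis
      proof (cases "x = n")
        case True thus ?thesis using x by auto
      next
        case False
        hence "x = n + (x - n)" "x - n \<in> {1..n-1}" using \<open>\<not> x \<le> n - 1\<close> x1 by auto
        thus ?thesis using x by (metis (mono_tags, lifting) UnI2 image_eqI mem_Collect_eq)
      qed
    qed
  qed auto
  have "card S = card ({y\<in>{1..n-1}. y \<in> S} \<union> {y\<in>{n}. y \<in> S}) + card ((\<lambda>b. n + b) ` {b\<in>{1..n-1}. n + b \<in> S})"
    by (subst eq, rule card_Un_disjoint) auto
  also have "card ({y\<in>{1..n-1}. y \<in> S} \<union> {y\<in>{n}. y \<in> S}) = card {y\<in>{1..n-1}. y \<in> S} + card {y\<in>{n}. y \<in> S}"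
    by (rule card_Un_disjoint) auto
  also have "card ((\<lambda>b. n + b) ` {b\<in>{1..n-1}. n + b \<in> S}) = card {b\<in>{1..n-1}. n + b \<in> S}"
    by (rule card_image) (auto simp: inj_on_def)
  finally show ?thesis .
qed

lemma nu_split:
  assumes "n \<ge> 1"
  shows "nu n A i j k =
    card ({y\<in>{1..n-1}. y \<in> nbhd n A i} \<inter> {y\<in>{1..n-1}. y \<in> nbhd n A j} \<inter> {y\<in>{1..n-1}. y \<in> nbhd n A k})
  + card ({y\<in>{n}. y \<in> nbhd n A i} \<inter> {y\<in>{n}. y \<in> nbhd n A j} \<inter> {y\<in>{n}. y \<in> nbhd n A k})
  + card ({b\<in>{1..n-1}. n + b \<in> nbhd n A i} \<inter> {b\<in>{1..n-1}. n + b \<in> nbhd n A j} \<inter> {b\<in>{1..n-1}. n + b \<in> nbhd n A k})"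
proof -
  have "nbhd n A i \<inter> nbhd n A j \<inter> nbhd n A k \<subseteq> {1..2*n-1}" unfolding nbhd_def by auto
  note cs = card_split[OF this assms]
  let ?N = "nbhd n A i \<inter> nbhd n A j \<inter> nbhd n A k"
  have e1: "{y\<in>{1..n-1}. y \<in> ?N} = {y\<in>{1..n-1}. y \<in> nbhd n A i} \<inter> {y\<in>{1..n-1}. y \<in> nbhd n A j} \<inter> {y\<in>{1..n-1}. y \<in> nbhd n A k}" by blast
  have e2: "{y\<in>{n}. y \<in> ?N} = {y\<in>{n}. y \<in> nbhd n A i} \<inter> {y\<in>{n}. y \<in> nbhd n A j} \<inter> {y\<in>{n}. y \<in> nbhd n A k}" by blast
  have e3: "{b\<in>{1..n-1}. n + b \<in> ?N} = {b\<in>{1..n-1}. n + b \<in> nbhd n A i} \<inter> {b\<in>{1..n-1}. n + b \<in> nbhd n A j} \<inter> {b\<in>{1..n-1}. n + b \<in> nbhd n A k}" by blast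
  show ?thesis unfolding nu_def using cs unfolding e1 e2 e3 .
qed



theorem lemma1:
  fixes n :: nat and A :: "nat \<Rightarrow> mat"
  assumes "n \<ge> 8"
    and "nonsym_class2_scheme (n - 1) A"
  shows "\<forall>i j k. 1 \<le> i \<and> i < j \<and> j < k \<and> k \<le> 2*n - 1 \<longrightarrow>
           real (nu n A i j k) \<le> (real n - 2) / 2 \<and>
           (real (nu n A i j k) = (real n - 2) / 2 \<longleftrightarrow>
              (\<exists>a\<in>{1..n-1}. i = a \<and> j = n \<and> k = n + a))"
proof -
  define V where "V = {1..n-1}"
  have sch: "assoc_scheme (n-1) 2 A" and A21: "\<forall>x\<in>V. \<forall>y\<in>V. A 2 x y = A 1 y x"
    using assms(2) unfolding nonsym_class2_scheme_def V_def by auto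
  have h01: "\<forall>i\<le>2. \<forall>x\<in>V. \<forall>y\<in>V. A i x y = 0 \<or> A i x y = 1"
    and hA0: "\<forall>x\<in>V. \<forall>y\<in>V. A 0 x y = (if x = y then 1 else 0)"
    and hsum: "\<forall>x\<in>V. \<forall>y\<in>V. (\<Sum>i\<le>2. A i x y) = 1"
    and hprod: "\<forall>i\<le>2. \<forall>j\<le>2. \<exists>c :: nat \<Rightarrow> real. \<forall>x\<in>V. \<forall>y\<in>V.
         mat_mult (n-1) (A i) (A j) x y = (\<Sum>k\<le>2. c k * A k x y)"
    using sch unfolding assoc_scheme_def V_def by blast+
  have sum3: "\<And>x y. x \<in> V \<Longrightarrow> y \<in> V \<Longrightarrow> A 0 x y + A 1 x y + A 2 x y = 1"
  proof -
    fix x y assume "x \<in> V" "y \<in> V"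
    hence "(\<Sum>i\<le>2. A i x y) = 1" using hsum by blast
    thus "A 0 x y + A 1 x y + A 2 x y = 1" by (simp add: numeral_2_eq_2)
  qed
  define T where "T = A 1"
  have T01: "\<And>x y. x \<in> V \<Longrightarrow> y \<in> V \<Longrightarrow> T x y = 0 \<or> T x y = 1" using h01 unfolding T_def by auto
  have Tdiag: "\<And>x. x \<in> V \<Longrightarrow> T x x = 0"
  proof -
    fix x assume x: "x \<in> V"
    have "A 0 x x + A 1 x x + A 2 x x = 1" using sum3[OF x x] .
    moreover have "A 0 x x = 1" using hA0 x by auto
    moreover have "A 2 x x = A 1 x x" using A21 x by auto
    ultimately show "T x x = 0" unfolding T_def by simp
  qed
  have Tanti: "\<And>x y. x \<in> V \<Longrightarrow> y \<in> V \<Longrightarrow> x \<noteq> y \<Longrightarrow> T x y + T y x = 1"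
  proof -
    fix x y assume x: "x \<in> V" and y: "y \<in> V" and xy: "x \<noteq> y"
    have "A 0 x y + A 1 x y + A 2 x y = 1" using sum3[OF x y] .
    moreover have "A 0 x y = 0" using hA0 x y xy by auto
    moreover have "A 2 x y = A 1 y x" using A21 x y by auto
    ultimately show "T x y + T y x = 1" unfolding T_def by simp
  qed
  have tr: "tour (n-1) T" unfolding tour_def using T01 Tdiag Tanti V_def by auto
  have cl: "closedT (n-1) T"
  proof -
    obtain c where c: "\<forall>x\<in>V. \<forall>y\<in>V. mat_mult (n-1) (A 1) (A 2) x y = (\<Sum>k\<le>2. c k * A k x y)"
      using hprod by force
    have "\<forall>x\<in>{1..n-1}. \<forall>y\<in>{1..n-1}.
      (\<Sum>z=1..n-1. T x z * T y z) = c 0 * (if x = y then 1 else 0) + c 1 * T x y + c 2 * T y x"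
    proof (intro ballI)
      fix x y assume x: "x \<in> {1..n-1}" and y: "y \<in> {1..n-1}"
      have "(\<Sum>z=1..n-1. T x z * T y z) = mat_mult (n-1) (A 1) (A 2) x y"
        unfolding mat_mult_def T_def using A21 y V_def by (intro sum.cong) auto
      also have "\<dots> = (\<Sum>k\<le>2. c k * A k x y)" using c x y V_def by auto
      also have "\<dots> = c 0 * A 0 x y + c 1 * A 1 x y + c 2 * A 2 x y" by (simp add: numeral_2_eq_2)
      also have "\<dots> = c 0 * (if x = y then 1 else 0) + c 1 * T x y + c 2 * T y x"
        using hA0 A21 x y V_def T_def by auto
      finally show "(\<Sum>z=1..n-1. T x z * T y z) = c 0 * (if x = y then 1 else 0) + c 1 * T x y + c 2 * T y x" .
    qed
    thus ?thesis unfolding closedT_def by blast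
  qed
  have cl': "closedT (n-1) (\<lambda>x y. T y x)"
  proof -
    obtain c where c: "\<forall>x\<in>V. \<forall>y\<in>V. mat_mult (n-1) (A 2) (A 1) x y = (\<Sum>k\<le>2. c k * A k x y)"
      using hprod by force
    have "\<forall>x\<in>{1..n-1}. \<forall>y\<in>{1..n-1}.
      (\<Sum>z=1..n-1. T z x * T z y) = c 0 * (if x = y then 1 else 0) + c 2 * T y x + c 1 * T x y"
    proof (intro ballI)
      fix x y assume x: "x \<in> {1..n-1}" and y: "y \<in> {1..n-1}"
      have "(\<Sum>z=1..n-1. T z x * T z y) = mat_mult (n-1) (A 2) (A 1) x y"
        unfolding mat_mult_def T_def using A21 x V_def by (intro sum.cong) auto
      also have "\<dots> = (\<Sum>k\<le>2. c k * A k x y)" using c x y V_def by auto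
      also have "\<dots> = c 0 * A 0 x y + c 1 * A 1 x y + c 2 * A 2 x y" by (simp add: numeral_2_eq_2)
      also have "\<dots> = c 0 * (if x = y then 1 else 0) + c 2 * T y x + c 1 * T x y"
        using hA0 A21 x y V_def T_def by auto
      finally show "(\<Sum>z=1..n-1. T z x * T z y) = c 0 * (if x = y then 1 else 0) + c 2 * T y x + c 1 * T x y" .
    qed
    thus ?thesis unfolding closedT_def by blast
  qed
  define Out where "Out = (\<lambda>x. {z\<in>{1..n-1}. T x z = 1})"
  define In where "In = (\<lambda>x. {z\<in>{1..n-1}. T z x = 1})"
  have V1: "1 \<in> {1..n-1}" "2 \<in> {1..n-1}" using assms(1) by auto
  define k where "k = card (Out 1)"
  have D: "\<And>x. x \<in> {1..n-1} \<Longrightarrow> card (Out x) = k"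
    unfolding k_def Out_def using deg[OF tr cl _ V1(1)] by blast
  have E: "\<And>x. x \<in> {1..n-1} \<Longrightarrow> card (In x) = k"
  proof -
    fix x assume x: "x \<in> {1..n-1}"
    have "card (Out x) = card (In x)" unfolding Out_def In_def by (rule degeq[OF tr cl cl' x])
    thus "card (In x) = k" using D[OF x] by simp
  qed
  have m2: "n - 1 \<ge> 2" using assms(1) by auto
  have L1: "\<And>x y. x \<in> {1..n-1} \<Longrightarrow> y \<in> {1..n-1} \<Longrightarrow> x \<noteq> y \<Longrightarrow> 2 * card (Out x \<inter> Out y) + 1 = k"
    unfolding Out_def by (rule lam[OF tr cl D[unfolded Out_def] E[unfolded In_def] m2])
  have L2: "\<And>x y. x \<in> {1..n-1} \<Longrightarrow> y \<in> {1..n-1} \<Longrightarrow> x \<noteq> y \<Longrightarrow> 2 * card (In x \<inter> In y) + 1 = k"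
    unfolding In_def using lam[OF tour_tr[OF tr] cl', of k] E[unfolded In_def] D[unfolded Out_def] m2 by simp
  define t where "t = card (Out 1 \<inter> Out 2)"
  have kt: "k = 2 * t + 1" using L1[OF V1] unfolding t_def by simp
  have mk: "n - 1 - 1 = k + k" using part[OF tr V1(1)] D[OF V1(1)] E[OF V1(1)] unfolding Out_def In_def by simp
  have nt: "n = 4 * t + 4" using mk kt assms(1) by linarith
  have t1: "t \<ge> 1" using nt assms(1) by linarith
  interpret dr "n-1" t Out In
  proof
    show "Out x \<subseteq> {1..n-1}" for x unfolding Out_def by auto
    show "In x \<subseteq> {1..n-1}" for x unfolding In_def by auto
    show "x \<in> {1..n-1} \<Longrightarrow> x \<notin> Out x" for x unfolding Out_def using Tdiag V_def by auto
    show "x \<in> {1..n-1} \<Longrightarrow> x \<notin> In x" for x unfolding In_def using Tdiag V_def by auto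
    show "x \<in> {1..n-1} \<Longrightarrow> y \<in> {1..n-1} \<Longrightarrow> y \<in> Out x \<longleftrightarrow> x \<in> In y" for x y
      unfolding Out_def In_def by auto
    show "x \<in> {1..n-1} \<Longrightarrow> y \<in> {1..n-1} \<Longrightarrow> x \<noteq> y \<Longrightarrow> y \<in> Out x \<or> y \<in> In x" for x y
      unfolding Out_def In_def using Tanti[of x y] T01[of x y] T01[of y x] V_def by auto
    show "x \<in> {1..n-1} \<Longrightarrow> y \<in> Out x \<Longrightarrow> y \<notin> In x" for x y
      unfolding Out_def In_def using Tanti[of x y] Tdiag[of x] V_def by (cases "x = y") auto
    show "x \<in> {1..n-1} \<Longrightarrow> card (Out x) = 2 * t + 1" for x using D kt by simp
    show "x \<in> {1..n-1} \<Longrightarrow> card (In x) = 2 * t + 1" for x using E kt by simp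
    show "x \<in> {1..n-1} \<Longrightarrow> y \<in> {1..n-1} \<Longrightarrow> x \<noteq> y \<Longrightarrow> card (Out x \<inter> Out y) = t" for x y
      using L1[of x y] kt by simp
    show "x \<in> {1..n-1} \<Longrightarrow> y \<in> {1..n-1} \<Longrightarrow> x \<noteq> y \<Longrightarrow> card (In x \<inter> In y) = t" for x y
      using L2[of x y] kt by simp
    show "t \<ge> 1" by (rule t1)
  qed
  have n1: "n \<ge> 1" using assms(1) by simp
  have PF: "{y\<in>{1..n-1}. y \<in> nbhd n A a} = Out a" "{y\<in>{n}. y \<in> nbhd n A a} = {}"
      "{b\<in>{1..n-1}. n + b \<in> nbhd n A a} = insert a (Out a)" if a: "a \<in> {1..n-1}" for a
  proof -
    show "{y\<in>{1..n-1}. y \<in> nbhd n A a} = Out a"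
      unfolding nbhd_def B1_def Out_def T_def using a by auto
    show "{y\<in>{n}. y \<in> nbhd n A a} = {}"
      unfolding nbhd_def B1_def using a by auto
    have "B1 n A a (n + b) = 1 \<longleftrightarrow> b = a \<or> T a b = 1" if b: "b \<in> {1..n-1}" for b
    proof -
      have "B1 n A a (n + b) = A 0 a b + T a b" unfolding B1_def T_def using a b by auto
      moreover have "A 0 a b = (if a = b then 1 else 0)" using hA0 a b V_def by auto
      moreover have "T a a = 0" using Tdiag a V_def by auto
      ultimately show ?thesis by auto
    qed
    thus "{b\<in>{1..n-1}. n + b \<in> nbhd n A a} = insert a (Out a)"
      unfolding nbhd_def Out_def using a by auto
  qed
  have PN: "{y\<in>{1..n-1}. y \<in> nbhd n A n} = {1..n-1}" "{y\<in>{n}. y \<in> nbhd n A n} = {}"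
      "{b\<in>{1..n-1}. n + b \<in> nbhd n A n} = {}"
  proof -
    have nn: "\<not> n \<le> n - 1" using n1 by linarith
    have Bn: "B1 n A n y = (if y \<le> n-1 then 1 else 0)" for y using nn unfolding B1_def by simp
    show "{y\<in>{1..n-1}. y \<in> nbhd n A n} = {1..n-1}" unfolding nbhd_def Bn by auto
    show "{y\<in>{n}. y \<in> nbhd n A n} = {}" unfolding nbhd_def Bn using n1 by auto
    show "{b\<in>{1..n-1}. n + b \<in> nbhd n A n} = {}" unfolding nbhd_def Bn by auto
  qed
  have PT: "{y\<in>{1..n-1}. y \<in> nbhd n A (n + a)} = Out a" "{y\<in>{n}. y \<in> nbhd n A (n + a)} = {n}"
      "{b\<in>{1..n-1}. n + b \<in> nbhd n A (n + a)} = In a" if a: "a \<in> {1..n-1}" for a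
  proof -
    show "{y\<in>{1..n-1}. y \<in> nbhd n A (n + a)} = Out a"
      unfolding nbhd_def B1_def Out_def T_def using a by auto
    show "{y\<in>{n}. y \<in> nbhd n A (n + a)} = {n}"
      unfolding nbhd_def B1_def using a by auto
    have "B1 n A (n + a) (n + b) = T b a" if b: "b \<in> {1..n-1}" for b
      unfolding B1_def T_def using a b A21 V_def by auto
    thus "{b\<in>{1..n-1}. n + b \<in> nbhd n A (n + a)} = In a"
      unfolding nbhd_def In_def using a by auto
  qed
  have half: "(real n - 2) / 2 = real (2 * t + 1)" using nt by simp
  have main: "nu n A i j k \<le> 2 * t + 1 \<and> (nu n A i j k = 2 * t + 1 \<longleftrightarrow> (\<exists>a\<in>{1..n-1}. i = a \<and> j = n \<and> k = n + a))"
    if ijk: "1 \<le> i" "i < j" "j < k" "k \<le> 2*n - 1" for i j k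
  proof -
    note ns = nu_split[OF n1, of A i j k]
    have Tk: "k > n \<Longrightarrow> k = n + (k - n) \<and> k - n \<in> {1..n-1}" using ijk by auto
    have Tj: "j > n \<Longrightarrow> j = n + (j - n) \<and> j - n \<in> {1..n-1}" using ijk by auto
    have Ti: "i > n \<Longrightarrow> i = n + (i - n) \<and> i - n \<in> {1..n-1}" using ijk by auto
    consider (FFF) "k \<le> n-1" | (FFn) "j \<le> n-1" "k = n" | (FFT) "j \<le> n-1" "k > n"
      | (FnT) "i \<le> n-1" "j = n" | (FTT) "i \<le> n-1" "j > n" | (nTT) "i = n" | (TTT) "i > n"
      using ijk by linarith
    then show ?thesis
    proof cases
      case FFF
      have V: "i \<in> {1..n-1}" "j \<in> {1..n-1}" "k \<in> {1..n-1}" using FFF ijk by auto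
      have "nu n A i j k < 2 * t + 1" using ns[unfolded PF[OF V(1)] PF[OF V(2)] PF[OF V(3)]] C1[OF V] ijk    by simp
      thus ?thesis using FFF ijk by auto
    next
      case FFn
      have V: "i \<in> {1..n-1}" "j \<in> {1..n-1}" using FFn ijk by auto
      have "Out i \<inter> Out j \<inter> {1..n-1} = Out i \<inter> Out j" using OV by blast
      hence "nu n A i j k = t" using ns[unfolded FFn(2) PF[OF V(1)] PF[OF V(2)] PN] cOO[OF V] ijk    FFn by simp
      thus ?thesis using t1 FFn n1 by auto
    next
      case FFT
      obtain c where c: "k = n + c" "c \<in> {1..n-1}" using Tk FFT by blast
      have V: "i \<in> {1..n-1}" "j \<in> {1..n-1}" using FFT ijk by auto
      have "nu n A i j k < 2 * t + 1" using ns[unfolded c(1) PF[OF V(1)] PF[OF V(2)] PT[OF c(2)]] C3[OF V c(2)] ijk    c(1) by simp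
      thus ?thesis using FFT ijk by auto
    next
      case FnT
      have "k > n" using FnT ijk by simp
      then obtain c where c: "k = n + c" "c \<in> {1..n-1}" using Tk by blast
      have V: "i \<in> {1..n-1}" using FnT ijk by auto
      have "Out i \<inter> {1..n-1} \<inter> Out c = Out i \<inter> Out c" using OV by blast
      hence nuv: "nu n A i j k = card (Out i \<inter> Out c)" using ns[unfolded FnT(2) c(1) PF[OF V] PT[OF c(2)] PN]    FnT c(1) by simp
      show ?thesis
      proof (cases "i = c")
        case True
        thus ?thesis using nuv cardO[OF V] FnT c V by auto
      next
        case False
        thus ?thesis using nuv cOO[OF V c(2) False] FnT c t1 by auto
      qed
    next
      case FTT
      obtain b where b: "j = n + b" "b \<in> {1..n-1}" using Tj FTT by blast
      have "k > n" using FTT ijk by simp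

      then obtain c where c: "k = n + c" "c \<in> {1..n-1}" using Tk by blast
      have V: "i \<in> {1..n-1}" using FTT ijk by auto
      have bc: "b \<noteq> c" using b c ijk by auto
      have "nu n A i j k < 2 * t + 1" using ns[unfolded b(1) c(1) PF[OF V] PT[OF b(2)] PT[OF c(2)]] C5[OF V b(2) c(2) bc]    b(1) c(1) by simp
      thus ?thesis using FTT by auto
    next
      case nTT
      have "j > n" using nTT ijk by simp

      then obtain b where b: "j = n + b" "b \<in> {1..n-1}" using Tj by blast
      have "k > n" using nTT ijk by simp

      then obtain c where c: "k = n + c" "c \<in> {1..n-1}" using Tk by blast
      have bc: "b \<noteq> c" using b c ijk by auto
      have "{1..n-1} \<inter> Out b \<inter> Out c = Out b \<inter> Out c" using OV by blast
      hence "nu n A i j k = t" using ns[unfolded nTT b(1) c(1) PN PT[OF b(2)] PT[OF c(2)]] cOO[OF b(2) c(2) bc]    b(1) c(1) nTT by simp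
      thus ?thesis using t1 nTT by auto
    next
      case TTT
      obtain a where a: "i = n + a" "a \<in> {1..n-1}" using Ti TTT by blast
      have "j > n" using TTT ijk by simp

      then obtain b where b: "j = n + b" "b \<in> {1..n-1}" using Tj by blast
      have "k > n" using TTT ijk by simp

      then obtain c where c: "k = n + c" "c \<in> {1..n-1}" using Tk by blast
      have d: "a \<noteq> b" "a \<noteq> c" "b \<noteq> c" using a b c ijk by auto
      have "nu n A i j k < 2 * t + 1" using ns[unfolded a(1) b(1) c(1) PT[OF a(2)] PT[OF b(2)] PT[OF c(2)]] C7[OF a(2) b(2) c(2) d]    a(1) b(1) c(1) by simp
      thus ?thesis using TTT by auto
    qed
  qed
  show ?thesis
  proof (intro allI impI)
    fix i j k assume "1 \<le> i \<and> i < j \<and> j < k \<and> k \<le> 2*n - 1"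
    hence m: "nu n A i j k \<le> 2 * t + 1 \<and> (nu n A i j k = 2 * t + 1 \<longleftrightarrow> (\<exists>a\<in>{1..n-1}. i = a \<and> j = n \<and> k = n + a))"
      using main by blast
    show "real (nu n A i j k) \<le> (real n - 2) / 2 \<and>
           (real (nu n A i j k) = (real n - 2) / 2 \<longleftrightarrow> (\<exists>a\<in>{1..n-1}. i = a \<and> j = n \<and> k = n + a))"
      unfolding half using m by (simp only: of_nat_le_iff of_nat_eq_iff)
  qed
qed


end
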